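(* Let $k\ge 1$ and let $G$ be a minimally $k$-connected graph with $n$ vertices and $m$ edges. Then $$|V_k|\ge (k+1)n-2m.$$
   Context: All graphs are finite, simple and undirected. A $k$-separator is a set of $k\ge 0$ vertices whose deletion leaves a disconnected graph. A graph is $k$-connected if it has more than $k$ vertices and contains no $(k-1)$-separator. A $k$-connected graph $G$ is minimally $k$-connected if $G-e$ is not $k$-connected for every edge $e$. $V_k$ denotes the set of vertices of $G$ of degree exactly $k$. *)

theory Defs
  imports Main
begin

definition simple_graph :: "'a set \<Rightarrow> 'a set set \<Rightarrow> bool" where
  "simple_graph V E \<longleftrightarrow> finite V \<and> (\<forall>e\<in>E. e \<subseteq> V \<and> card e = 2)"

inductive reachable :: "'a set \<Rightarrow> 'a set set \<Rightarrow> 'a \<Rightarrow> 'a \<Rightarrow> bool" for V E where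
  refl: "v \<in> V \<Longrightarrow> reachable V E v v"
| step: "reachable V E u v \<Longrightarrow> {v, w} \<in> E \<Longrightarrow> w \<in> V \<Longrightarrow> reachable V E u w"

definition connected_graph :: "'a set \<Rightarrow> 'a set set \<Rightarrow> bool" where
  "connected_graph V E \<longleftrightarrow> (\<forall>u\<in>V. \<forall>v\<in>V. reachable V E u v)"

definition del_vertices :: "'a set \<Rightarrow> 'a set set \<Rightarrow> 'a set \<Rightarrow> 'a set set" where
  "del_vertices V E S = {e\<in>E. e \<subseteq> V - S}"

definition separator :: "'a set \<Rightarrow> 'a set set \<Rightarrow> nat \<Rightarrow> 'a set \<Rightarrow> bool" where
  "separator V E k S \<longleftrightarrow> S \<subseteq> V \<and> card S = k \<and>
     \<not> connected_graph (V - S) (del_vertices V E S)"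

definition k_connected :: "'a set \<Rightarrow> 'a set set \<Rightarrow> nat \<Rightarrow> bool" where
  "k_connected V E k \<longleftrightarrow> card V > k \<and> (\<nexists>S. separator V E (k - 1) S)"

definition minimally_k_connected :: "'a set \<Rightarrow> 'a set set \<Rightarrow> nat \<Rightarrow> bool" where
  "minimally_k_connected V E k \<longleftrightarrow> k_connected V E k \<and>
     (\<forall>e\<in>E. \<not> k_connected V (E - {e}) k)"

definition degree :: "'a set set \<Rightarrow> 'a \<Rightarrow> nat" where
  "degree E v = card {e\<in>E. v \<in> e}"

definition V_deg :: "'a set \<Rightarrow> 'a set set \<Rightarrow> nat \<Rightarrow> 'a set" where
  "V_deg V E k = {v\<in>V. degree E v = k}"

end

theory Submission
  imports Defs
begin

lemma reach_isolated:
  assumes "reachable W F a x" "a = v" "\<And>w. {v,w} \<in> F \<Longrightarrow> w \<in> W \<Longrightarrow> w = v"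
  shows "x = v"
  using assms by (induction rule: reachable.induct) auto

lemma min_deg:
  assumes sg: "simple_graph V E" and k1: "k \<ge> 1" and kc: "k_connected V E k" and vV: "v \<in> V"
  shows "degree E v \<ge> k"
proof (rule ccontr)
  assume "\<not> k \<le> degree E v"
  hence dk: "degree E v < k" by simp
  have fV: "finite V" using sg by (simp add: simple_graph_def)
  have EP: "E \<subseteq> Pow V" using sg by (auto simp: simple_graph_def)
  hence fE: "finite E" using fV by (meson finite_Pow_iff finite_subset)
  define Ev where "Ev = {e\<in>E. v \<in> e}"
  define N where "N = (\<Union>e\<in>Ev. e - {v})"
  have fEv: "finite Ev" using fE by (simp add: Ev_def)
  have "card N \<le> (\<Sum>e\<in>Ev. card (e - {v}))" unfolding N_def using fEv by (rule card_UN_le)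
  also have "\<dots> = (\<Sum>e\<in>Ev. 1)"
  proof (rule sum.cong)
    fix e assume "e \<in> Ev"
    hence "card e = 2" "v \<in> e" using sg by (auto simp: Ev_def simple_graph_def)
    thus "card (e - {v}) = 1"
      by (simp add: card_Diff_singleton)
  qed simp
  also have "\<dots> = degree E v" by (simp add: degree_def Ev_def)
  finally have cN: "card N \<le> degree E v" .
  have NV: "N \<subseteq> V" using sg by (auto simp: N_def Ev_def simple_graph_def)
  have vN: "v \<notin> N" by (auto simp: N_def)
  have fN: "finite N" using NV fV finite_subset by blast
  have kV: "card V > k" using kc by (simp add: k_connected_def)
  define R where "R = V - N - {v}"
  have cR: "card R = card V - card N - 1"
  proof -
    have "R = V - insert v N" by (auto simp: R_def)
    moreover have "insert v N \<subseteq> V" using NV vV by auto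
    moreover have "card (insert v N) = card N + 1" using fN vN by simp
    ultimately show ?thesis using card_Diff_subset[of "insert v N" V] fN by simp
  qed
  have "k - 1 - card N \<le> card R" using cR kV cN dk by linarith
  then obtain T where TR: "T \<subseteq> R" and cT: "card T = k - 1 - card N"
    by (meson obtain_subset_with_card_n)
  define S where "S = N \<union> T"
  have fT: "finite T" using TR fV R_def finite_subset by blast
  have NT: "N \<inter> T = {}" using TR by (auto simp: R_def)
  have cS: "card S = k - 1" unfolding S_def using card_Un_disjoint[OF fN fT NT] cT cN dk by simp
  have SV: "S \<subseteq> V" using NV TR by (auto simp: S_def R_def)
  have vS: "v \<notin> S" using vN TR by (auto simp: S_def R_def)
  have "card (V - S) = card V - (k - 1)" using card_Diff_subset[OF finite_subset[OF SV fV] SV] cS by simp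
  hence c2: "card (V - S) \<ge> 2" using kV k1 by simp
  have "\<exists>w\<in>V - S. w \<noteq> v"
  proof (rule ccontr)
    assume "\<not> ?thesis"
    hence "V - S \<subseteq> {v}" by auto
    hence "card (V - S) \<le> 1" using card_mono[of "{v}" "V - S"] by simp
    thus False using c2 by simp
  qed
  then obtain w where wS: "w \<in> V - S" "w \<noteq> v" by blast
  have "\<not> reachable (V - S) (del_vertices V E S) v w"
  proof
    assume r: "reachable (V - S) (del_vertices V E S) v w"
    have "w = v"
    proof (rule reach_isolated[OF r HOL.refl])
      fix x assume "{v,x} \<in> del_vertices V E S" "x \<in> V - S"
      hence "{v,x} \<in> Ev" "x \<notin> S" by (auto simp: del_vertices_def Ev_def)
      hence "x \<notin> N \<or> x = v" by (auto simp: S_def)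
      moreover have "x = v \<or> x \<in> N" using \<open>{v,x} \<in> Ev\<close> unfolding N_def by blast
      ultimately show "x = v" by blast
    qed
    thus False using wS by simp
  qed
  hence "separator V E (k - 1) S" using SV cS vS vV wS
    by (auto simp: separator_def connected_graph_def)
  thus False using kc by (auto simp: k_connected_def)
qed

lemma handshake:
  assumes sg: "simple_graph V E"
  shows "(\<Sum>v\<in>V. degree E v) = 2 * card E"
proof -
  have fV: "finite V" using sg by (simp add: simple_graph_def)
  have EP: "E \<subseteq> Pow V" using sg by (auto simp: simple_graph_def)
  hence fE: "finite E" using fV by (meson finite_Pow_iff finite_subset)
  have "(\<Sum>v\<in>V. degree E v) = (\<Sum>v\<in>V. \<Sum>e\<in>E. if v \<in> e then 1 else 0)"
    by (simp add: degree_def sum.If_cases fE Int_def)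
  also have "\<dots> = (\<Sum>e\<in>E. \<Sum>v\<in>V. if v \<in> e then 1 else 0)" by (rule sum.swap)
  also have "\<dots> = (\<Sum>e\<in>E. card e)"
  proof (rule sum.cong)
    fix e assume "e \<in> E"
    hence "e \<subseteq> V" using EP by auto
    hence "V \<inter> e = e" by auto
    thus "(\<Sum>v\<in>V. if v \<in> e then 1 else 0) = card e"
      by (simp add: sum.If_cases fV)
  qed simp
  also have "\<dots> = (\<Sum>e\<in>E. 2)" using sg by (auto simp: simple_graph_def intro: sum.cong)
  finally show ?thesis by simp
qed

theorem mainTheorem3:
  fixes V :: "'a set" and E :: "'a set set" and k :: nat
  assumes "simple_graph V E"
    and "k \<ge> 1"
    and "minimally_k_connected V E k"
  shows "int (card (V_deg V E k)) \<ge> int (k + 1) * int (card V) - 2 * int (card E)"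
proof -
  have kc: "k_connected V E k" using assms(3) by (simp add: minimally_k_connected_def)
  have fV: "finite V" using assms(1) by (simp add: simple_graph_def)
  let ?A = "V_deg V E k"
  have AV: "?A \<subseteq> V" by (auto simp: V_deg_def)
  have "(\<Sum>v\<in>V. int (k + 1) - (if v \<in> ?A then 1 else 0)) \<le> (\<Sum>v\<in>V. int (degree E v))"
  proof (rule sum_mono)
    fix v assume "v \<in> V"
    hence "degree E v \<ge> k" using min_deg[OF assms(1,2) kc] by blast
    thus "int (k + 1) - (if v \<in> ?A then 1 else 0) \<le> int (degree E v)"
      using \<open>v \<in> V\<close> by (auto simp: V_deg_def)
  qed
  moreover have "(\<Sum>v\<in>V. int (k + 1) - (if v \<in> ?A then 1 else 0)) = int (k+1) * int (card V) - int (card ?A)"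
    using AV fV by (simp add: sum_subtractf sum.If_cases Int_absorb1 Int_commute)
  moreover have "(\<Sum>v\<in>V. int (degree E v)) = 2 * int (card E)"
    using handshake[OF assms(1)] by (simp flip: of_nat_sum)
  ultimately show ?thesis by linarith
qed

end
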